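(* In the setting described in the context, the map $\varphi$ defined by $\varphi(d)(x,y)=d(x,\cdot)+d(y,\cdot)-d(x,y)-d(\cdot,\cdot)+m$ is a bijection from the set of metrics on $A$ that belong to $\mathcal{B}_2$ onto the set of $\Sigma_m$-proximities on $A$, with inverse $\psi(\sigma)(x,y)=\tfrac12(\sigma(x,x)+\sigma(y,y))-\sigma(x,y)$.
   Context: $A$ is a nonempty set (possibly infinite); $m\in\mathbb{R}$. A metric on $A$ is a function $d:A^2\to\mathbb{R}$ such that for all $x,y,z\in A$: $d(x,y)=0$ iff $x=y$, and $d(x,y)+d(x,z)-d(y,z)\ge0$. $\mathcal{B}_1$ is a set of functions $A\to\mathbb{R}$ forming a real linear space containing all constant functions, and $\mu:\mathcal{B}_1\to\mathbb{R}$ is a linear functional with $\mu(c)=c$ for every constant function $c$ and monotone: if $f,g\in\mathcal{B}_1$ and $f\ge g$ pointwise, then $\mu(f)\ge\mu(g)$. For $f:A^2\to\mathbb{R}$ such that $y\mapsto f(x,y)$ lies in $\mathcal{B}_1$ for every $x$, write $f(x,\cdot)=\mu(y\mapsto f(x,y))$. $\mathcal{B}_2$ is a set of functions $A^2\to\mathbb{R}$ forming a real linear space that contains all constant functions and all functions $(x,y)\mapsto h(x)$ and $(x,y)\mapsto h(y)$ with $h\in\mathcal{B}_1$, and such that for every $f\in\mathcal{B}_2$: $y\mapsto f(x,y)\in\mathcal{B}_1$ for every $x$, $x\mapsto f(x,\cdot)\in\mathcal{B}_1$, and $x\mapsto f(x,x)\in\mathcal{B}_1$. For a symmetric $d\in\mathcal{B}_2$,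 $d(\cdot,\cdot)=\mu(x\mapsto d(x,\cdot))$. A function $\sigma\in\mathcal{B}_2$ is a $\Sigma_m$-proximity on $A$ if for all $x,y,z\in A$: (1) $\sigma(x,\cdot)=m$; (2) $\sigma(x,y)+\sigma(x,z)-\sigma(y,z)\le\sigma(x,x)$, with strict inequality whenever $z=y$ and $x\ne y$. *)

theory Defs
  imports Main "HOL.Real"
begin

text \<open>The set A is modelled by the (nonempty) type 'a.\<close>

definition metric_on :: "('a \<Rightarrow> 'a \<Rightarrow> real) \<Rightarrow> bool" where
  "metric_on d \<longleftrightarrow> (\<forall>x y. d x y = 0 \<longleftrightarrow> x = y) \<and>
     (\<forall>x y z. d x y + d x z - d y z \<ge> 0)"

definition lin_space1 :: "('a \<Rightarrow> real) set \<Rightarrow> bool" where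
  "lin_space1 B \<longleftrightarrow> (\<forall>f\<in>B. \<forall>g\<in>B. (\<lambda>x. f x + g x) \<in> B) \<and>
     (\<forall>c. \<forall>f\<in>B. (\<lambda>x. c * f x) \<in> B) \<and> (\<forall>c. (\<lambda>x. c) \<in> B)"

definition lin_space2 :: "('a \<Rightarrow> 'a \<Rightarrow> real) set \<Rightarrow> bool" where
  "lin_space2 B \<longleftrightarrow> (\<forall>f\<in>B. \<forall>g\<in>B. (\<lambda>x y. f x y + g x y) \<in> B) \<and>
     (\<forall>c. \<forall>f\<in>B. (\<lambda>x y. c * f x y) \<in> B) \<and> (\<forall>c. (\<lambda>x y. c) \<in> B)"

definition mean_on :: "('a \<Rightarrow> real) set \<Rightarrow> (('a \<Rightarrow> real) \<Rightarrow> real) \<Rightarrow> bool" where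
  "mean_on B \<mu> \<longleftrightarrow> (\<forall>f\<in>B. \<forall>g\<in>B. \<mu> (\<lambda>x. f x + g x) = \<mu> f + \<mu> g) \<and>
     (\<forall>c. \<forall>f\<in>B. \<mu> (\<lambda>x. c * f x) = c * \<mu> f) \<and>
     (\<forall>c. \<mu> (\<lambda>x. c) = c) \<and>
     (\<forall>f\<in>B. \<forall>g\<in>B. (\<forall>x. f x \<ge> g x) \<longrightarrow> \<mu> f \<ge> \<mu> g)"

text \<open>f(x,.) = mu (y |-> f(x,y)).\<close>
definition part_mean :: "(('a \<Rightarrow> real) \<Rightarrow> real) \<Rightarrow> ('a \<Rightarrow> 'a \<Rightarrow> real) \<Rightarrow> 'a \<Rightarrow> real" where
  "part_mean \<mu> f x = \<mu> (\<lambda>y. f x y)"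

text \<open>f(.,.) = mu (x |-> f(x,.)).\<close>
definition full_mean :: "(('a \<Rightarrow> real) \<Rightarrow> real) \<Rightarrow> ('a \<Rightarrow> 'a \<Rightarrow> real) \<Rightarrow> real" where
  "full_mean \<mu> f = \<mu> (\<lambda>x. part_mean \<mu> f x)"

definition compatible_B2 :: "('a \<Rightarrow> real) set \<Rightarrow> (('a \<Rightarrow> real) \<Rightarrow> real) \<Rightarrow>
    ('a \<Rightarrow> 'a \<Rightarrow> real) set \<Rightarrow> bool" where
  "compatible_B2 B1 \<mu> B2 \<longleftrightarrow> lin_space2 B2 \<and>
     (\<forall>h\<in>B1. (\<lambda>x y. h x) \<in> B2 \<and> (\<lambda>x y. h y) \<in> B2) \<and>
     (\<forall>f\<in>B2. (\<forall>x. (\<lambda>y. f x y) \<in> B1) \<and> (\<lambda>x. part_mean \<mu> f x) \<in> B1 \<and> (\<lambda>x. f x x) \<in> B1)"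

definition sigma_proximity :: "(('a \<Rightarrow> real) \<Rightarrow> real) \<Rightarrow> ('a \<Rightarrow> 'a \<Rightarrow> real) set \<Rightarrow> real \<Rightarrow>
    ('a \<Rightarrow> 'a \<Rightarrow> real) \<Rightarrow> bool" where
  "sigma_proximity \<mu> B2 m \<sigma> \<longleftrightarrow> \<sigma> \<in> B2 \<and>
     (\<forall>x. part_mean \<mu> \<sigma> x = m) \<and>
     (\<forall>x y z. \<sigma> x y + \<sigma> x z - \<sigma> y z \<le> \<sigma> x x) \<and>
     (\<forall>x y. x \<noteq> y \<longrightarrow> \<sigma> x y + \<sigma> x y - \<sigma> y y < \<sigma> x x)"

definition phi_map :: "(('a \<Rightarrow> real) \<Rightarrow> real) \<Rightarrow> real \<Rightarrow> ('a \<Rightarrow> 'a \<Rightarrow> real) \<Rightarrow> ('a \<Rightarrow> 'a \<Rightarrow> real)" where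
  "phi_map \<mu> m d = (\<lambda>x y. part_mean \<mu> d x + part_mean \<mu> d y - d x y - full_mean \<mu> d + m)"

definition psi_map :: "('a \<Rightarrow> 'a \<Rightarrow> real) \<Rightarrow> ('a \<Rightarrow> 'a \<Rightarrow> real)" where
  "psi_map \<sigma> = (\<lambda>x y. (\<sigma> x x + \<sigma> y y) / 2 - \<sigma> x y)"

end

theory Submission
  imports Defs
begin

lemma lin1_add: "lin_space1 B \<Longrightarrow> f \<in> B \<Longrightarrow> g \<in> B \<Longrightarrow> (\<lambda>x. f x + g x) \<in> B"
  unfolding lin_space1_def by blast
lemma lin1_scale: "lin_space1 B \<Longrightarrow> f \<in> B \<Longrightarrow> (\<lambda>x. c * f x) \<in> B"
  unfolding lin_space1_def by blast
lemma lin1_const: "lin_space1 B \<Longrightarrow> (\<lambda>x. c) \<in> B"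
  unfolding lin_space1_def by blast
lemma mu_add: "mean_on B \<mu> \<Longrightarrow> f \<in> B \<Longrightarrow> g \<in> B \<Longrightarrow> \<mu> (\<lambda>x. f x + g x) = \<mu> f + \<mu> g"
  unfolding mean_on_def by blast
lemma mu_scale: "mean_on B \<mu> \<Longrightarrow> f \<in> B \<Longrightarrow> \<mu> (\<lambda>x. c * f x) = c * \<mu> f"
  unfolding mean_on_def by blast
lemma mu_const: "mean_on B \<mu> \<Longrightarrow> \<mu> (\<lambda>x. c) = c"
  unfolding mean_on_def by blast
lemma lin2_add: "lin_space2 B \<Longrightarrow> f \<in> B \<Longrightarrow> g \<in> B \<Longrightarrow> (\<lambda>x y. f x y + g x y) \<in> B"
  unfolding lin_space2_def by blast
lemma lin2_scale: "lin_space2 B \<Longrightarrow> f \<in> B \<Longrightarrow> (\<lambda>x y. c * f x y) \<in> B"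
  unfolding lin_space2_def by blast
lemma lin2_const: "lin_space2 B \<Longrightarrow> (\<lambda>x y. c) \<in> B"
  unfolding lin_space2_def by blast

lemma mu_comb:
  assumes "lin_space1 B" "mean_on B \<mu>" "f \<in> B" "g \<in> B"
  shows "\<mu> (\<lambda>x. a * f x + b * g x + c) = a * \<mu> f + b * \<mu> g + c"
proof -
  have 1: "(\<lambda>x. a * f x) \<in> B" "(\<lambda>x. b * g x) \<in> B" "(\<lambda>x. c) \<in> B"
    using assms lin1_scale lin1_const by auto
  have 2: "(\<lambda>x. a * f x + b * g x) \<in> B" using lin1_add[OF assms(1) 1(1,2)] .
  have "\<mu> (\<lambda>x. a * f x + b * g x + c) = \<mu> (\<lambda>x. a * f x + b * g x) + \<mu> (\<lambda>x. c)"
    using mu_add[OF assms(2) 2 1(3)] .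
  also have "\<mu> (\<lambda>x. a * f x + b * g x) = \<mu> (\<lambda>x. a * f x) + \<mu> (\<lambda>x. b * g x)"
    using mu_add[OF assms(2) 1(1,2)] .
  also have "\<mu> (\<lambda>x. a * f x) = a * \<mu> f" using mu_scale[OF assms(2,3)] .
  also have "\<mu> (\<lambda>x. b * g x) = b * \<mu> g" using mu_scale[OF assms(2,4)] .
  also have "\<mu> (\<lambda>x. c) = c" using mu_const[OF assms(2)] .
  finally show ?thesis .
qed

lemma lin2_comb:
  assumes "lin_space2 B" "f \<in> B" "g \<in> B" "h \<in> B"
  shows "(\<lambda>x y. a * f x y + b * g x y + c * h x y + e) \<in> B"
proof -
  have 1: "(\<lambda>x y. a * f x y) \<in> B" "(\<lambda>x y. b * g x y) \<in> B" "(\<lambda>x y. c * h x y) \<in> B"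
    "(\<lambda>x y. e) \<in> B"
    using assms lin2_scale lin2_const by auto
  have "(\<lambda>x y. a * f x y + b * g x y) \<in> B" using lin2_add[OF assms(1) 1(1,2)] .
  then have "(\<lambda>x y. a * f x y + b * g x y + c * h x y) \<in> B" using lin2_add[OF assms(1) _ 1(3)] by blast
  then show ?thesis using lin2_add[OF assms(1) _ 1(4)] by blast
qed

theorem theorem1:
  fixes B1 :: "('a \<Rightarrow> real) set" and \<mu> :: "('a \<Rightarrow> real) \<Rightarrow> real"
    and B2 :: "('a \<Rightarrow> 'a \<Rightarrow> real) set" and m :: real
  assumes "lin_space1 B1" and "mean_on B1 \<mu>" and "compatible_B2 B1 \<mu> B2"
  shows "bij_betw (phi_map \<mu> m) {d. metric_on d \<and> d \<in> B2} {\<sigma>. sigma_proximity \<mu> B2 m \<sigma>}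
    \<and> (\<forall>\<sigma>. sigma_proximity \<mu> B2 m \<sigma> \<longrightarrow>
          psi_map \<sigma> \<in> {d. metric_on d \<and> d \<in> B2} \<and> phi_map \<mu> m (psi_map \<sigma>) = \<sigma>)
    \<and> (\<forall>d. metric_on d \<and> d \<in> B2 \<longrightarrow> psi_map (phi_map \<mu> m d) = d)"
proof -
  note L1 = assms(1) and M = assms(2)
  have L2: "lin_space2 B2" using assms(3) unfolding compatible_B2_def by auto
  have lift1: "\<And>h. h \<in> B1 \<Longrightarrow> (\<lambda>x y. h x) \<in> B2" and lift2: "\<And>h. h \<in> B1 \<Longrightarrow> (\<lambda>x y. h y) \<in> B2"
    using assms(3) unfolding compatible_B2_def by auto
  have row: "\<And>f x. f \<in> B2 \<Longrightarrow> (\<lambda>y. f x y) \<in> B1"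
    and pm: "\<And>f. f \<in> B2 \<Longrightarrow> (\<lambda>x. part_mean \<mu> f x) \<in> B1"
    and dg: "\<And>f. f \<in> B2 \<Longrightarrow> (\<lambda>x. f x x) \<in> B1"
    using assms(3) unfolding compatible_B2_def by auto
  have const1: "\<And>c. (\<lambda>x. c) \<in> B1" using L1 unfolding lin_space1_def by auto
  have muc: "\<And>c. \<mu> (\<lambda>x. c) = c" using M unfolding mean_on_def by auto
  have A: "sigma_proximity \<mu> B2 m (phi_map \<mu> m d) \<and> psi_map (phi_map \<mu> m d) = d"
    if d: "metric_on d" "d \<in> B2" for d
  proof -
    define D where "D = (\<lambda>x. part_mean \<mu> d x)"
    define F where "F = full_mean \<mu> d"
    have DB: "D \<in> B1" using pm[OF d(2)] unfolding D_def .
    have FD: "F = \<mu> D" unfolding F_def D_def full_mean_def by simp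
    have ph: "phi_map \<mu> m d = (\<lambda>x y. D x + D y - d x y - F + m)"
      unfolding phi_map_def D_def F_def by simp
    have d0: "\<And>x. d x x = 0" using d(1) unfolding metric_on_def by auto
    have tri: "\<And>x y z. d x y + d x z - d y z \<ge> 0" using d(1) unfolding metric_on_def by auto
    have pos: "\<And>x y :: 'a. x \<noteq> y \<Longrightarrow> d x y > 0"
    proof -
      fix x y :: 'a assume "x \<noteq> y"
      then have "d x y \<noteq> 0" using d(1) unfolding metric_on_def by auto
      moreover have "d x y + d x y - d y y \<ge> 0" using tri by blast
      ultimately show "d x y > 0" using d0 by auto
    qed
    have inB2: "(\<lambda>x y. D x + D y - d x y - F + m) \<in> B2"
    proof -
      have "(\<lambda>x y. 1 * D x + 1 * D y + (-1) * d x y + (m - F)) \<in> B2"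
        by (rule lin2_comb[OF L2 lift1[OF DB] lift2[OF DB] d(2)])
      then show ?thesis by (simp add: algebra_simps)
    qed
    have pmx: "part_mean \<mu> (\<lambda>x y. D x + D y - d x y - F + m) x = m" for x :: 'a
    proof -
      have "part_mean \<mu> (\<lambda>x y. D x + D y - d x y - F + m) x
          = \<mu> (\<lambda>y. 1 * D y + (-1) * d x y + (D x - F + m))"
        unfolding part_mean_def by (rule arg_cong[where f=\<mu>]) (simp add: fun_eq_iff algebra_simps)
      also have "\<dots> = \<mu> D - \<mu> (\<lambda>y. d x y) + (D x - F + m)"
        using mu_comb[OF L1 M DB row[OF d(2), of x], where a=1 and b="-1" and c="D x - F + m"] by simp
      also have "\<mu> (\<lambda>y. d x y) = D x" unfolding D_def part_mean_def by simp
      finally show ?thesis using FD by simp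
    qed
    have sp: "sigma_proximity \<mu> B2 m (phi_map \<mu> m d)"
      unfolding sigma_proximity_def ph
    proof (intro conjI allI impI)
      show "(\<lambda>x y. D x + D y - d x y - F + m) \<in> B2" by (rule inB2)
      fix x :: 'a show "part_mean \<mu> (\<lambda>x y. D x + D y - d x y - F + m) x = m" by (rule pmx)
    next
      fix x y z :: 'a
      show "D x + D y - d x y - F + m + (D x + D z - d x z - F + m) - (D y + D z - d y z - F + m)
          \<le> D x + D x - d x x - F + m"
        using tri[of x y z] d0[of x] by simp
    next
      fix x y :: 'a assume "x \<noteq> y"
      then show "D x + D y - d x y - F + m + (D x + D y - d x y - F + m) - (D y + D y - d y y - F + m)
          < D x + D x - d x x - F + m"
        using pos[of x y] d0[of x] d0[of y] by simp
    qed
    have "psi_map (phi_map \<mu> m d) = d"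
      unfolding psi_map_def ph by (simp add: fun_eq_iff d0 field_simps)
    with sp show ?thesis by simp
  qed
  have B: "metric_on (psi_map s) \<and> psi_map s \<in> B2 \<and> phi_map \<mu> m (psi_map s) = s"
    if s: "sigma_proximity \<mu> B2 m s" for s
  proof -
    have sB: "s \<in> B2" and sm: "\<And>x. part_mean \<mu> s x = m"
      and s2: "\<And>x y z. s x y + s x z - s y z \<le> s x x"
      and s3: "\<And>x y. x \<noteq> y \<Longrightarrow> s x y + s x y - s y y < s x x"
      using s unfolding sigma_proximity_def by auto
    define g where "g = (\<lambda>x. s x x)"
    have gB: "g \<in> B1" using dg[OF sB] unfolding g_def .
    have met: "metric_on (psi_map s)"
      unfolding metric_on_def psi_map_def
    proof (intro conjI allI)
      fix x y :: 'a
      show "((s x x + s y y) / 2 - s x y = 0) = (x = y)"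
        using s3[of x y] by (cases "x = y") auto
    next
      fix x y z :: 'a
      show "0 \<le> (s x x + s y y) / 2 - s x y + ((s x x + s z z) / 2 - s x z) - ((s y y + s z z) / 2 - s y z)"
        using s2[of x y z] by (simp add: field_simps)
    qed
    have inB2: "psi_map s \<in> B2"
    proof -
      have "(\<lambda>x y. (1/2) * g x + (1/2) * g y + (-1) * s x y + 0) \<in> B2"
        by (rule lin2_comb[OF L2 lift1[OF gB] lift2[OF gB] sB])
      then show ?thesis unfolding psi_map_def g_def by (simp add: algebra_simps add_divide_distrib)
    qed
    have Dx: "part_mean \<mu> (psi_map s) x = \<mu> g / 2 - m + s x x / 2" for x :: 'a
    proof -
      have "part_mean \<mu> (psi_map s) x = \<mu> (\<lambda>y. (1/2) * g y + (-1) * s x y + s x x / 2)"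
        unfolding part_mean_def psi_map_def g_def
        by (rule arg_cong[where f=\<mu>]) (simp add: fun_eq_iff algebra_simps)
      also have "\<dots> = \<mu> g / 2 - \<mu> (\<lambda>y. s x y) + s x x / 2"
        using mu_comb[OF L1 M gB row[OF sB, of x], where a="1/2" and b="-1" and c="s x x / 2"] by simp
      also have "\<mu> (\<lambda>y. s x y) = m" using sm[of x] unfolding part_mean_def .
      finally show ?thesis .
    qed
    have F: "full_mean \<mu> (psi_map s) = \<mu> g - m"
    proof -
      have "full_mean \<mu> (psi_map s) = \<mu> (\<lambda>x. (1/2) * g x + 0 * g x + (\<mu> g / 2 - m))"
        unfolding full_mean_def Dx g_def
        by (rule arg_cong[where f=\<mu>]) (simp add: fun_eq_iff algebra_simps)
      also have "\<dots> = \<mu> g - m"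
        using mu_comb[OF L1 M gB gB, where a="1/2" and b=0 and c="\<mu> g / 2 - m"] by simp
      finally show ?thesis .
    qed
    have "phi_map \<mu> m (psi_map s) = s"
      unfolding phi_map_def F Dx by (simp add: fun_eq_iff psi_map_def field_simps)
    with met inB2 show ?thesis by simp
  qed
  have bij: "bij_betw (phi_map \<mu> m) {d. metric_on d \<and> d \<in> B2} {\<sigma>. sigma_proximity \<mu> B2 m \<sigma>}"
  proof (rule bij_betw_byWitness[where f'=psi_map])
    show "\<forall>a\<in>{d. metric_on d \<and> d \<in> B2}. psi_map (phi_map \<mu> m a) = a" using A by auto
    show "\<forall>a'\<in>{\<sigma>. sigma_proximity \<mu> B2 m \<sigma>}. phi_map \<mu> m (psi_map a') = a'" using B by auto
    show "phi_map \<mu> m ` {d. metric_on d \<and> d \<in> B2} \<subseteq> {\<sigma>. sigma_proximity \<mu> B2 m \<sigma>}" using A by auto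
    show "psi_map ` {\<sigma>. sigma_proximity \<mu> B2 m \<sigma>} \<subseteq> {d. metric_on d \<and> d \<in> B2}" using B by auto
  qed
  show ?thesis using bij A B by auto
qed

end
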